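(* Fix $k>0$ and $K>0$. Let $(\tau^\star,\delta^\star,\gamma^\star,s^* )$ be such that $1<\delta^\star<\Phi$, $\tau^\star=\tau_m(\delta^\star)$, and either $\gamma^\star=M_{\mathcal F}(\delta^\star)/(1+k)$ and $s^*=\pi/2$, or $0<k<1$, $\gamma^\star=M_{\mathcal F}(\delta^\star)/(1-k)$ and $s^*=3\pi/2$. Let $H=\{(\tau,\delta,\gamma,s):\ 0<\tau\le1,\ \delta>1,\ \gamma>0,\ s\in S^1,\ g(\tau,s)=0,\ \text{and } D\mathcal G_\tau(\tau,s)\text{ has eigenvalues } e^{\pm i\theta}\text{ for some }\theta\in(0,\pi)\}$, where $g$ and $\mathcal G_\tau$ are computed with parameters $\delta,\gamma$. Then $(\tau^\star,\delta^\star,\gamma^\star,s^* )$ is an accumulation point of $H$. Moreover, if $\mathbf p(\tau,\delta,\gamma,s)=(\tau,\delta,\gamma)$, then $\mathbf p(H)$ contains a smooth two-dimensional surface in $\mathbb R^3$ having $(\tau^\star,\delta^\star,\gamma^\star)$ in its closure.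
   Context: Let $p(\delta)=-\delta^2+\delta+1$, $\Phi=(1+\sqrt5)/2$, $\mathcal F_\delta(\tau)=\tau^{p(\delta)}-\tau^\delta$; for $1<\delta<\Phi$, $\tau_m(\delta)=(p(\delta)/\delta)^{1/(\delta^2-1)}$ is the maximiser of $\mathcal F_\delta$ on $(0,1]$ and $M_{\mathcal F}(\delta)=\mathcal F_\delta(\tau_m(\delta))$. With $S^1=\mathbb R/2\pi\mathbb Z$, $g(\tau,s)=\tau^{\delta^2}+\gamma\tau^{\delta^2-\delta}(1+k\sin s)-\tau$, and $\mathcal G_\tau(y,s)=\left(y^{\delta^2}+\gamma y^{\delta^2-\delta}(1+k\sin s),\ s-\frac{\ln y}{K}+\frac{\ln\tau}{K}\right)$ with derivative $D\mathcal G_\tau(y,s)=\begin{pmatrix}\delta^2y^{\delta^2-1}+\gamma(\delta^2-\delta)y^{-p(\delta)}(1+k\sin s) & \gamma k y^{\delta^2-\delta}\cos s\\ -\frac{1}{Ky} & 1\end{pmatrix}$; $D\mathcal G_\tau(\tau,s)$ denotes this matrix at $y=\tau$. *)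

theory Defs
  imports "HOL-Analysis.Analysis"
begin

definition pexp :: "real \<Rightarrow> real" where
  "pexp \<delta> = - \<delta>\<^sup>2 + \<delta> + 1"

definition Phi :: real where
  "Phi = (1 + sqrt 5) / 2"

definition FF :: "real \<Rightarrow> real \<Rightarrow> real" where
  "FF \<delta> \<tau> = \<tau> powr (pexp \<delta>) - \<tau> powr \<delta>"

definition tau_m :: "real \<Rightarrow> real" where
  "tau_m \<delta> = (pexp \<delta> / \<delta>) powr (1 / (\<delta>\<^sup>2 - 1))"

definition M_F :: "real \<Rightarrow> real" where
  "M_F \<delta> = FF \<delta> (tau_m \<delta>)"

text \<open>g(tau,s) with parameters k, delta, gamma; s is a real representative of a point of S^1.\<close>
definition gfun :: "real \<Rightarrow> real \<Rightarrow> real \<Rightarrow> real \<Rightarrow> real \<Rightarrow> real" where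
  "gfun k \<delta> \<gamma> \<tau> s =
     \<tau> powr (\<delta>\<^sup>2) + \<gamma> * \<tau> powr (\<delta>\<^sup>2 - \<delta>) * (1 + k * sin s) - \<tau>"

text \<open>The derivative matrix D G_tau(y,s) (it does not depend on tau).\<close>
definition DG :: "real \<Rightarrow> real \<Rightarrow> real \<Rightarrow> real \<Rightarrow> real \<Rightarrow> real \<Rightarrow> real^2^2" where
  "DG k K \<delta> \<gamma> y s = vector
     [vector [\<delta>\<^sup>2 * y powr (\<delta>\<^sup>2 - 1) + \<gamma> * (\<delta>\<^sup>2 - \<delta>) * y powr (- pexp \<delta>) * (1 + k * sin s),
              \<gamma> * k * y powr (\<delta>\<^sup>2 - \<delta>) * cos s],
      vector [- 1 / (K * y), 1]]"

definition eigenvalues_C :: "real^'n^'n \<Rightarrow> complex set" where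
  "eigenvalues_C A = {\<mu>. \<exists>v :: complex^'n. v \<noteq> 0 \<and>
      (\<chi> i j. complex_of_real (A $ i $ j)) *v v = \<mu> *s v}"

definition Hset :: "real \<Rightarrow> real \<Rightarrow> (real \<times> real \<times> real \<times> real) set" where
  "Hset k K = {(\<tau>, \<delta>, \<gamma>, s). 0 < \<tau> \<and> \<tau> \<le> 1 \<and> \<delta> > 1 \<and> \<gamma> > 0 \<and>
      gfun k \<delta> \<gamma> \<tau> s = 0 \<and>
      (\<exists>\<theta>\<in>{0<..<pi}. eigenvalues_C (DG k K \<delta> \<gamma> \<tau> s) = {cis \<theta>, cis (- \<theta>)})}"

definition proj3 :: "real \<times> real \<times> real \<times> real \<Rightarrow> real \<times> real \<times> real" where
  "proj3 x = (case x of (\<tau>, \<delta>, \<gamma>, s) \<Rightarrow> (\<tau>, \<delta>, \<gamma>))"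

text \<open>C-infinity real functions on an open set U of R^2: coinductively, continuous with
  partial derivatives existing (Frechet) that are again C-infinity.\<close>
coinductive Cinf_on :: "(real \<times> real) set \<Rightarrow> (real \<times> real \<Rightarrow> real) \<Rightarrow> bool" for U where
  "continuous_on U f \<Longrightarrow>
   (\<forall>z\<in>U. (f has_derivative (\<lambda>h. fst h * fx z + snd h * fy z)) (at z)) \<Longrightarrow>
   Cinf_on U fx \<Longrightarrow> Cinf_on U fy \<Longrightarrow> Cinf_on U f"

definition smooth_param :: "(real \<times> real) set \<Rightarrow> (real \<times> real \<Rightarrow> real \<times> real \<times> real) \<Rightarrow> bool" where
  "smooth_param U \<phi> \<longleftrightarrow> open U \<and>
     Cinf_on U (\<lambda>z. fst (\<phi> z)) \<and> Cinf_on U (\<lambda>z. fst (snd (\<phi> z))) \<and>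
     Cinf_on U (\<lambda>z. snd (snd (\<phi> z))) \<and>
     (\<forall>z\<in>U. \<exists>D. (\<phi> has_derivative D) (at z) \<and> inj D)"

text \<open>Smooth two-dimensional (embedded) surface in R^3 (regular surface in the sense of do Carmo):
  each point has a neighbourhood V such that V \<inter> S is the homeomorphic image of a smooth
  regular parametrization.\<close>
definition smooth_surface :: "(real \<times> real \<times> real) set \<Rightarrow> bool" where
  "smooth_surface S \<longleftrightarrow> (\<forall>x\<in>S. \<exists>V U \<phi> \<psi>. open V \<and> x \<in> V \<and> smooth_param U \<phi> \<and>
       homeomorphism U (V \<inter> S) \<phi> \<psi>)"

end

theory Submission
  imports Defs
begin


inductive Cl :: "(real\<times>real) set \<Rightarrow> ((real\<times>real\<Rightarrow>real) \<Rightarrow> bool) \<Rightarrow> (real\<times>real\<Rightarrow>real) \<Rightarrow> bool"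
  for U X where
  base: "X f \<Longrightarrow> Cl U X f"
| cinf: "Cinf_on U f \<Longrightarrow> Cl U X f"
| add: "Cl U X f \<Longrightarrow> Cl U X g \<Longrightarrow> Cl U X (\<lambda>z. f z + g z)"
| mult: "Cl U X f \<Longrightarrow> Cl U X g \<Longrightarrow> Cl U X (\<lambda>z. f z * g z)"

definition Der :: "(real\<times>real) set \<Rightarrow> (real\<times>real\<Rightarrow>real) \<Rightarrow> (real\<times>real\<Rightarrow>real) \<Rightarrow> (real\<times>real\<Rightarrow>real) \<Rightarrow> bool" where
  "Der U f fx fy \<longleftrightarrow> (\<forall>z\<in>U. (f has_derivative (\<lambda>h. fst h * fx z + snd h * fy z)) (at z))"

definition Step :: "(real\<times>real) set \<Rightarrow> ((real\<times>real\<Rightarrow>real) \<Rightarrow> bool) \<Rightarrow> (real\<times>real\<Rightarrow>real) \<Rightarrow> bool" where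
  "Step U X f \<longleftrightarrow> continuous_on U f \<and> (\<exists>fx fy. Der U f fx fy \<and> Cl U X fx \<and> Cl U X fy)"

lemma Cl_Step:
  assumes X: "\<And>f. X f \<Longrightarrow> Step U X f" and "Cl U X f"
  shows "Step U X f"
  using assms(2)
proof (induction rule: Cl.induct)
  case (base f) then show ?case by (rule X)
next
  case (cinf f)
  then obtain fx fy where "continuous_on U f" "Der U f fx fy" "Cinf_on U fx" "Cinf_on U fy"
    by (cases rule: Cinf_on.cases) (auto simp: Der_def)
  then show ?case unfolding Step_def by (blast intro: Cl.cinf)
next
  case (add f g)
  from add.IH(1) obtain fx fy where f: "continuous_on U f" "Der U f fx fy"
     "Cl U X fx" "Cl U X fy" unfolding Step_def by blast
  from add.IH(2) obtain gx gy where g: "continuous_on U g" "Der U g gx gy"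
     "Cl U X gx" "Cl U X gy" unfolding Step_def by blast
  have d: "Der U (\<lambda>z. f z + g z) (\<lambda>z. fx z + gx z) (\<lambda>z. fy z + gy z)"
    unfolding Der_def
  proof
    fix z assume that: "z \<in> U"
    show "((\<lambda>z. f z + g z) has_derivative (\<lambda>h. fst h * (fx z + gx z) + snd h * (fy z + gy z))) (at z)"
      using has_derivative_add[OF f(2)[unfolded Der_def, rule_format, OF that] g(2)[unfolded Der_def, rule_format, OF that]]
      by (rule has_derivative_eq_rhs) (simp add: algebra_simps)
  qed
  have c: "continuous_on U (\<lambda>z. f z + g z)" using f g by (intro continuous_intros)
  have "Cl U X (\<lambda>z. fx z + gx z)" "Cl U X (\<lambda>z. fy z + gy z)" using f g by (auto intro: Cl.add)
  then show ?case unfolding Step_def using c d by blast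
next
  case (mult f g)
  from mult.IH(1) obtain fx fy where f: "continuous_on U f" "Der U f fx fy"
     "Cl U X fx" "Cl U X fy" unfolding Step_def by blast
  from mult.IH(2) obtain gx gy where g: "continuous_on U g" "Der U g gx gy"
     "Cl U X gx" "Cl U X gy" unfolding Step_def by blast
  have d: "Der U (\<lambda>z. f z * g z) (\<lambda>z. f z * gx z + fx z * g z) (\<lambda>z. f z * gy z + fy z * g z)"
    unfolding Der_def
  proof
    fix z assume that: "z \<in> U"
    show "((\<lambda>z. f z * g z) has_derivative (\<lambda>h. fst h * (f z * gx z + fx z * g z) + snd h * (f z * gy z + fy z * g z))) (at z)"
      using has_derivative_mult[OF f(2)[unfolded Der_def, rule_format, OF that] g(2)[unfolded Der_def, rule_format, OF that]]
      by (rule has_derivative_eq_rhs) (simp add: algebra_simps)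
  qed
  have c: "continuous_on U (\<lambda>z. f z * g z)" using f g by (intro continuous_intros)
  have "Cl U X (\<lambda>z. f z * gx z)" "Cl U X (\<lambda>z. fx z * g z)" "Cl U X (\<lambda>z. f z * gy z)" "Cl U X (\<lambda>z. fy z * g z)"
    using f g mult.hyps by (auto intro: Cl.mult)
  then have "Cl U X (\<lambda>z. f z * gx z + fx z * g z)" "Cl U X (\<lambda>z. f z * gy z + fy z * g z)"
    by (auto intro: Cl.add)
  then show ?case unfolding Step_def using c d by blast
qed

lemma upto:
  assumes X: "\<And>f. X f \<Longrightarrow> Step U X f" and "Cl U X f"
  shows "Cinf_on U f"
proof (rule Cinf_on.coinduct[of "Cl U X", OF assms(2)])
  fix g assume "Cl U X g"
  from Cl_Step[OF X this] obtain fx fy where "continuous_on U g" "Der U g fx fy" "Cl U X fx" "Cl U X fy"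
    unfolding Step_def by blast
  then show "\<exists>f fx fy. g = f \<and> continuous_on U f \<and>
          (\<forall>z\<in>U. (f has_derivative (\<lambda>h. fst h * fx z + snd h * fy z)) (at z)) \<and>
          (Cl U X fx \<or> Cinf_on U fx) \<and> (Cl U X fy \<or> Cinf_on U fy)"
    unfolding Der_def by blast
qed

lemma Cinf_const: "Cinf_on U (\<lambda>z. c)"
proof -
  let ?X = "\<lambda>f. \<exists>c. f = (\<lambda>z::real\<times>real. c::real)"
  have "Step U ?X f" if "?X f" for f
  proof -
    from that obtain c where f: "f = (\<lambda>z. c)" by blast
    have "Der U f (\<lambda>z. 0) (\<lambda>z. 0)" unfolding Der_def f by (simp add: has_derivative_const)
    moreover have "?X (\<lambda>z. 0)" by blast
    ultimately show ?thesis unfolding Step_def f by (auto intro: Cl.base)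
  qed
  moreover have "Cl U ?X (\<lambda>z. c)" by (rule Cl.base) blast
  ultimately show ?thesis by (rule upto)
qed

lemma Cinf_fst: "Cinf_on U fst"
proof -
  let ?X = "\<lambda>f. f = (fst::real\<times>real\<Rightarrow>real)"
  have d: "(fst has_derivative (\<lambda>h. fst h * 1 + snd h * 0)) (at z)" for z :: "real\<times>real"
    using has_derivative_fst[OF has_derivative_ident, of "at z"] by simp
  have "Der U fst (\<lambda>z. 1) (\<lambda>z. 0)" unfolding Der_def using d by blast
  moreover have "Cl U ?X (\<lambda>z. 1)" "Cl U ?X (\<lambda>z. 0)" by (auto intro: Cl.cinf Cinf_const)
  moreover have "continuous_on U fst" by (intro continuous_intros)
  ultimately have "Step U ?X f" if "?X f" for f unfolding Step_def that by blast
  then show ?thesis using upto[of ?X U fst] Cl.base[of ?X] by blast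
qed

lemma Cinf_snd: "Cinf_on U snd"
proof -
  let ?X = "\<lambda>f. f = (snd::real\<times>real\<Rightarrow>real)"
  have d: "(snd has_derivative (\<lambda>h. fst h * 0 + snd h * 1)) (at z)" for z :: "real\<times>real"
    using has_derivative_snd[OF has_derivative_ident, of "at z"] by simp
  have "Der U snd (\<lambda>z. 0) (\<lambda>z. 1)" unfolding Der_def using d by blast
  moreover have "Cl U ?X (\<lambda>z. 1)" "Cl U ?X (\<lambda>z. 0)" by (auto intro: Cl.cinf Cinf_const)
  moreover have "continuous_on U snd" by (intro continuous_intros)
  ultimately have "Step U ?X f" if "?X f" for f unfolding Step_def that by blast
  then show ?thesis using upto[of ?X U snd] Cl.base[of ?X] by blast
qed

lemma Cinf_add: "Cinf_on U f \<Longrightarrow> Cinf_on U g \<Longrightarrow> Cinf_on U (\<lambda>z. f z + g z)"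
  by (rule upto[of "\<lambda>_. False"]) (auto intro: Cl.add Cl.cinf)

lemma Cinf_mult: "Cinf_on U f \<Longrightarrow> Cinf_on U g \<Longrightarrow> Cinf_on U (\<lambda>z. f z * g z)"
  by (rule upto[of "\<lambda>_. False"]) (auto intro: Cl.mult Cl.cinf)

lemma Cinf_contD: "Cinf_on U f \<Longrightarrow> continuous_on U f"
  by (cases rule: Cinf_on.cases) auto

lemma Cinf_D: "Cinf_on U f \<Longrightarrow> \<exists>fx fy. Der U f fx fy \<and> Cinf_on U fx \<and> Cinf_on U fy"
  by (cases rule: Cinf_on.cases) (auto simp: Der_def)

lemma Cinf_comp_gen:
  assumes h: "Cinf_on U h"
    and G: "\<And>z. z \<in> U \<Longrightarrow> (G has_real_derivative G' (h z)) (at (h z))"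
    and G': "Cl U (\<lambda>f. f = (\<lambda>z. G (h z))) (\<lambda>z. G' (h z))"
  shows "Cinf_on U (\<lambda>z. G (h z))"
proof -
  let ?X = "\<lambda>f. f = (\<lambda>z. G (h z))"
  obtain hx hy where hd: "Der U h hx hy" and hx: "Cinf_on U hx" and hy: "Cinf_on U hy"
    using Cinf_D[OF h] by blast
  have der: "((\<lambda>z. G (h z)) has_derivative (\<lambda>d. fst d * (G' (h z) * hx z) + snd d * (G' (h z) * hy z))) (at z)"
    if "z \<in> U" for z
    using has_derivative_compose[OF hd[unfolded Der_def, rule_format, OF that] G[OF that, unfolded has_field_derivative_def]]
    by (rule has_derivative_eq_rhs) (auto simp: algebra_simps)
  have D: "Der U (\<lambda>z. G (h z)) (\<lambda>z. G' (h z) * hx z) (\<lambda>z. G' (h z) * hy z)"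
    unfolding Der_def using der by blast
  have c: "continuous_on U (\<lambda>z. G (h z))"
    using der by (intro continuous_at_imp_continuous_on ballI) (auto dest: has_derivative_continuous)
  have "Cl U ?X (\<lambda>z. G' (h z) * hx z)" "Cl U ?X (\<lambda>z. G' (h z) * hy z)"
    using G' hx hy by (auto intro: Cl.mult Cl.cinf)
  then have "Step U ?X f" if "?X f" for f
    unfolding Step_def that using c D by blast
  then show ?thesis using upto[of ?X U] Cl.base[of ?X] by blast
qed

lemma Cinf_comp:
  assumes h: "Cinf_on U h"
    and G: "\<And>z. z \<in> U \<Longrightarrow> (G has_real_derivative G' (h z)) (at (h z))"
    and G': "Cinf_on U (\<lambda>z. G' (h z))"
  shows "Cinf_on U (\<lambda>z. G (h z))"
  by (rule Cinf_comp_gen[OF h G]) (auto intro: Cl.cinf G')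

lemma Cinf_exp: "Cinf_on U h \<Longrightarrow> Cinf_on U (\<lambda>z. exp (h z))"
  by (rule Cinf_comp_gen[where G=exp and h=h and G'=exp]) (auto intro: Cl.base DERIV_exp)

lemma Cinf_inverse:
  assumes h: "Cinf_on U h" and nz: "\<And>z. z \<in> U \<Longrightarrow> h z \<noteq> 0"
  shows "Cinf_on U (\<lambda>z. inverse (h z))"
proof (rule Cinf_comp_gen[where G=inverse and h=h and G'="\<lambda>x. inverse x * inverse x * (-1)"])
  show "Cinf_on U h" by fact
  fix z assume "z \<in> U"
  then show "(inverse has_real_derivative inverse (h z) * inverse (h z) * (-1)) (at (h z))"
    using nz[OF \<open>z \<in> U\<close>] by (auto intro!: derivative_eq_intros simp: field_simps power2_eq_square)
next
  show "Cl U (\<lambda>f. f = (\<lambda>z. inverse (h z))) (\<lambda>z. inverse (h z) * inverse (h z) * (-1))"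
    by (intro Cl.mult Cl.base Cl.cinf Cinf_const) auto
qed

lemma Cinf_cong:
  assumes "open U" "Cinf_on U g" "\<And>z. z \<in> U \<Longrightarrow> f z = g z"
  shows "Cinf_on U f"
proof -
  let ?X = "\<lambda>h. h = f"
  obtain gx gy where gd: "Der U g gx gy" and gx: "Cinf_on U gx" and gy: "Cinf_on U gy"
    using Cinf_D[OF assms(2)] by blast
  have c: "continuous_on U f"
  proof -
    have "continuous_on U g" by (rule Cinf_contD[OF assms(2)])
    moreover have "continuous_on U f = continuous_on U g" by (rule continuous_on_cong[OF refl assms(3)])
    ultimately show ?thesis by simp
  qed
  have D: "Der U f gx gy" unfolding Der_def
  proof
    fix z assume z: "z \<in> U"
    show "(f has_derivative (\<lambda>h. fst h * gx z + snd h * gy z)) (at z)"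
      by (rule has_derivative_transform_within_open[OF gd[unfolded Der_def, rule_format, OF z] assms(1) z]) (simp add: assms(3))
  qed
  have "Cl U ?X gx" "Cl U ?X gy" using gx gy by (auto intro: Cl.cinf)
  then have "Step U ?X h" if "?X h" for h
    unfolding Step_def that using c D by blast
  then show ?thesis using upto[of ?X U] Cl.base[of ?X] by blast
qed

lemma Cinf_ln:
  assumes h: "Cinf_on U h" and pos: "\<And>z. z \<in> U \<Longrightarrow> h z > 0"
  shows "Cinf_on U (\<lambda>z. ln (h z))"
proof (rule Cinf_comp[where G=ln and h=h and G'=inverse, OF h])
  fix z assume "z \<in> U" then show "(ln has_real_derivative inverse (h z)) (at (h z))"
    using pos by (intro DERIV_ln) auto
next
  show "Cinf_on U (\<lambda>z. inverse (h z))" using pos by (intro Cinf_inverse h) (metis less_irrefl)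
qed

lemma Cinf_diff:
  assumes "Cinf_on U f" "Cinf_on U g" shows "Cinf_on U (\<lambda>z. f z - g z)"
proof -
  have "Cinf_on U (\<lambda>z. (-1) * g z)" by (rule Cinf_mult[OF Cinf_const assms(2)])
  from Cinf_add[OF assms(1) this] have "Cinf_on U (\<lambda>z. f z + (-1) * g z)" .
  moreover have "(\<lambda>z. f z + (-1) * g z) = (\<lambda>z. f z - g z)" by (rule ext) simp
  ultimately show ?thesis by simp
qed

lemma Cinf_divide:
  assumes "Cinf_on U f" "Cinf_on U g" "\<And>z. z \<in> U \<Longrightarrow> g z \<noteq> 0"
  shows "Cinf_on U (\<lambda>z. f z / g z)"
proof -
  have "Cinf_on U (\<lambda>z. f z * inverse (g z))" by (rule Cinf_mult[OF assms(1) Cinf_inverse[OF assms(2,3)]])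
  moreover have "(\<lambda>z. f z * inverse (g z)) = (\<lambda>z. f z / g z)" by (rule ext) (simp add: divide_inverse)
  ultimately show ?thesis by simp
qed

lemma Cinf_powr:
  assumes "open U" "Cinf_on U f" "Cinf_on U e" "\<And>z. z \<in> U \<Longrightarrow> f z > 0"
  shows "Cinf_on U (\<lambda>z. f z powr e z)"
proof (rule Cinf_cong[OF assms(1) Cinf_exp[OF Cinf_mult[OF assms(3) Cinf_ln[OF assms(2,4)]]]])
  fix z assume "z \<in> U"
  then have "f z > 0" by (rule assms(4))
  then show "f z powr e z = exp (e z * ln (f z))" by (simp add: powr_def mult.commute)
qed

lemma Cinf_sqrt:
  assumes "open U" "Cinf_on U f" "\<And>z. z \<in> U \<Longrightarrow> f z > 0"
  shows "Cinf_on U (\<lambda>z. sqrt (f z))"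
proof (rule Cinf_cong[OF assms(1) Cinf_powr[OF assms(1,2) Cinf_const[of U "1/2"] assms(3)]])
  fix z assume "z \<in> U"
  then have "f z > 0" by (rule assms(3))
  then show "sqrt (f z) = f z powr (1/2)" by (simp add: powr_half_sqrt)
qed



lemma eig2:
  fixes a b c d \<theta> :: real
  assumes c: "c \<noteq> 0" and det: "a*d - b*c = 1" and tr: "a + d = 2*cos \<theta>"
  shows "eigenvalues_C (vector [vector [a,b], vector [c,d]] :: real^2^2) = {cis \<theta>, cis (-\<theta>)}"
proof -
  let ?M = "vector [vector [a,b], vector [c,d]] :: real^2^2"
  define A where "A = complex_of_real a"
  define B where "B = complex_of_real b"
  define C where "C = complex_of_real c"
  define D where "D = complex_of_real d"
  have mv: "((\<chi> i j. complex_of_real (?M $ i $ j)) *v v) = vector [A* v$1 + B* v$2, C* v$1 + D* v$2]" for v :: "complex^2"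
    by (simp add: vec_eq_iff forall_2 matrix_vector_mult_def sum_2 A_def B_def C_def D_def)
  have sv: "\<mu> *s v = vector [\<mu> * v$1, \<mu>* v$2]" for \<mu> and v :: "complex^2"
    by (simp add: vec_eq_iff forall_2)
  have veq: "(vector [x1,x2] :: complex^2) = vector [y1,y2] \<longleftrightarrow> x1 = y1 \<and> x2 = y2" for x1 x2 y1 y2
    by (simp add: vec_eq_iff forall_2)
  have nz: "v \<noteq> 0 \<longleftrightarrow> v$1 \<noteq> 0 \<or> v$2 \<noteq> 0" for v :: "complex^2"
    by (simp add: vec_eq_iff forall_2)
  have s: "cis \<theta> + cis (-\<theta>) = A + D"
    by (simp add: complex_eq_iff A_def D_def tr)
  have p: "cis \<theta> * cis (-\<theta>) = A*D - B*C"
    using det by (simp add: cis_mult A_def B_def C_def D_def flip: of_real_mult of_real_diff)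
  have char: "A*D - B*C - (A+D)*\<mu> + \<mu>*\<mu> = (\<mu> - cis \<theta>) * (\<mu> - cis (-\<theta>))" for \<mu>
  proof -
    have "(\<mu> - cis \<theta>) * (\<mu> - cis (-\<theta>)) = \<mu>*\<mu> - (cis \<theta> + cis (-\<theta>))*\<mu> + cis \<theta> * cis (-\<theta>)"
      by (simp add: algebra_simps)
    then show ?thesis by (simp add: s p)
  qed
  show ?thesis
  proof (rule set_eqI, rule iffI)
    fix \<mu> assume "\<mu> \<in> eigenvalues_C ?M"
    then obtain v where v: "v \<noteq> 0" and e: "(\<chi> i j. complex_of_real (?M $ i $ j)) *v v = \<mu> *s v"
      unfolding eigenvalues_C_def by blast
    from e have e1: "A* v$1 + B* v$2 - \<mu>* v$1 = 0" and e2: "C* v$1 + D* v$2 - \<mu>* v$2 = 0"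
      unfolding mv sv veq by auto
    have h1: "(A*D - B*C - (A+D)*\<mu> + \<mu>*\<mu>) * v$1 = (D-\<mu>)*(A* v$1 + B* v$2 - \<mu>* v$1) - B*(C* v$1 + D* v$2 - \<mu>* v$2)"
      by (simp add: algebra_simps)
    have h2: "(A*D - B*C - (A+D)*\<mu> + \<mu>*\<mu>) * v$2 = (A-\<mu>)*(C* v$1 + D* v$2 - \<mu>* v$2) - C*(A* v$1 + B* v$2 - \<mu>* v$1)"
      by (simp add: algebra_simps)
    have "A*D - B*C - (A+D)*\<mu> + \<mu>*\<mu> = 0"
      using h1 h2 e1 e2 v nz by auto
    then show "\<mu> \<in> {cis \<theta>, cis (-\<theta>)}" unfolding char by auto
  next
    fix \<mu> assume "\<mu> \<in> {cis \<theta>, cis (-\<theta>)}"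
    then have ch: "A*D - B*C - (A+D)*\<mu> + \<mu>*\<mu> = 0" unfolding char by auto
    let ?v = "vector [D - \<mu>, -C] :: complex^2"
    have "?v \<noteq> 0" unfolding nz using c by (simp add: C_def)
    moreover have "A*(D-\<mu>) + B*(-C) = \<mu>*(D-\<mu>)"
    proof -
      have "A*(D-\<mu>) + B*(-C) - \<mu>*(D-\<mu>) = A*D - B*C - (A+D)*\<mu> + \<mu>*\<mu>" by (simp add: algebra_simps)
      then show ?thesis using ch by simp
    qed
    moreover have "C*(D-\<mu>) + D*(-C) = \<mu>*(-C)" by (simp add: algebra_simps)
    ultimately show "\<mu> \<in> eigenvalues_C ?M"
      unfolding eigenvalues_C_def mv sv veq by (intro CollectI exI[of _ ?v]) simp
  qed
qed



definition sgb :: "bool \<Rightarrow> real" where "sgb b = (if b then 1 else -1)"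
definition aaf :: "real \<Rightarrow> real \<Rightarrow> real" where
  "aaf \<tau> \<delta> = \<delta>^2 - \<delta> + \<delta> * \<tau> powr (\<delta>^2 - 1)"
definition Ccf :: "real \<Rightarrow> real \<Rightarrow> real \<Rightarrow> real \<Rightarrow> real" where
  "Ccf k K \<tau> \<delta> = K * (1 - aaf \<tau> \<delta>) * \<tau> powr pexp \<delta> / k"
definition Qaf :: "real \<Rightarrow> real \<Rightarrow> real \<Rightarrow> real \<Rightarrow> real" where
  "Qaf k K \<tau> \<delta> = (FF \<delta> \<tau>)^2 - (1 - k^2) * (Ccf k K \<tau> \<delta>)^2"
definition Dnf :: "bool \<Rightarrow> real \<Rightarrow> real \<Rightarrow> real \<Rightarrow> real \<Rightarrow> real" where
  "Dnf b k K \<tau> \<delta> = FF \<delta> \<tau> + sgb b * k * sqrt (Qaf k K \<tau> \<delta>)"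
definition Gmf :: "bool \<Rightarrow> real \<Rightarrow> real \<Rightarrow> real \<Rightarrow> real \<Rightarrow> real" where
  "Gmf b k K \<tau> \<delta> = ((FF \<delta> \<tau>)^2 + k^2 * (Ccf k K \<tau> \<delta>)^2) / Dnf b k K \<tau> \<delta>"
definition Svf :: "bool \<Rightarrow> real \<Rightarrow> real \<Rightarrow> real \<Rightarrow> real \<Rightarrow> real" where
  "Svf b k K \<tau> \<delta> = (if b then arccos (Ccf k K \<tau> \<delta> / Gmf b k K \<tau> \<delta>)
      else 2 * pi - arccos (Ccf k K \<tau> \<delta> / Gmf b k K \<tau> \<delta>))"
definition good :: "bool \<Rightarrow> real \<Rightarrow> real \<Rightarrow> real \<Rightarrow> real \<Rightarrow> bool" where
  "good b k K \<tau> \<delta> \<longleftrightarrow> 1 < \<delta> \<and> \<delta> < Phi \<and> 0 < \<tau> \<and> \<tau> < tau_m \<delta> \<and> Qaf k K \<tau> \<delta> > 0 \<and>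
     Dnf b k K \<tau> \<delta> > 0 \<and> sgb b * (FF \<delta> \<tau> - Gmf b k K \<tau> \<delta>) > 0"

lemma pexp_pos:
  assumes "1 < \<delta>" "\<delta> < Phi" shows "0 < pexp \<delta>"
proof -
  have "2*\<delta> - 1 < sqrt 5" using assms(2) by (simp add: Phi_def)
  moreover have "0 \<le> 2*\<delta> - 1" using assms(1) by simp
  ultimately have "(2*\<delta> - 1)^2 < (sqrt 5)^2" by (rule power_strict_mono) simp
  then have "(2*\<delta> - 1)^2 < 5" by simp
  then show ?thesis unfolding pexp_def by (simp add: power2_eq_square algebra_simps)
qed

lemma pexp_lt: "1 < \<delta> \<Longrightarrow> pexp \<delta> < \<delta>"
  unfolding pexp_def by (simp add: power2_eq_square) (metis less_1_mult)

lemma tau_m_props: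
  assumes "1 < \<delta>" "\<delta> < Phi"
  shows "0 < tau_m \<delta>" "tau_m \<delta> < 1" "tau_m \<delta> powr (\<delta>^2 - 1) = pexp \<delta> / \<delta>"
proof -
  have p: "0 < pexp \<delta>" using pexp_pos[OF assms] .
  have pl: "pexp \<delta> < \<delta>" using pexp_lt assms(1) .
  have q0: "0 < pexp \<delta> / \<delta>" using p assms(1) by simp
  have q1: "pexp \<delta> / \<delta> < 1" using pl assms(1) by simp
  have e: "0 < \<delta>^2 - 1" using assms(1) by (simp add: power2_eq_square) (metis less_1_mult)
  show "0 < tau_m \<delta>" unfolding tau_m_def using q0 p assms(1) by simp
  have "(pexp \<delta> / \<delta>) powr (1 / (\<delta>^2 - 1)) < 1 powr (1 / (\<delta>^2 - 1))"
    by (rule powr_less_mono2) (use e q0 q1 in auto)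
  then show "tau_m \<delta> < 1" unfolding tau_m_def by simp
  have "tau_m \<delta> powr (\<delta>^2 - 1) = (pexp \<delta> / \<delta>) powr (1 / (\<delta>^2 - 1) * (\<delta>^2 - 1))"
    unfolding tau_m_def by (simp add: powr_powr)
  also have "1 / (\<delta>^2 - 1) * (\<delta>^2 - 1) = 1" using e by simp
  also have "(pexp \<delta> / \<delta>) powr 1 = pexp \<delta> / \<delta>" by (rule powr_one) (use q0 in linarith)
  finally show "tau_m \<delta> powr (\<delta>^2 - 1) = pexp \<delta> / \<delta>" .
qed

lemma exps:
  assumes "0 < \<tau>"
  shows "\<tau> powr (\<delta>^2 - \<delta>) * \<tau> powr pexp \<delta> = \<tau>"
    "\<tau> powr (\<delta>^2 - \<delta>) * \<tau> powr \<delta> = \<tau> powr (\<delta>^2)"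
    "\<tau> powr \<delta> / \<tau> powr pexp \<delta> = \<tau> powr (\<delta>^2 - 1)"
proof -
  have "\<tau> powr (\<delta>^2 - \<delta>) * \<tau> powr pexp \<delta> = \<tau> powr ((\<delta>^2 - \<delta>) + pexp \<delta>)" by (simp add: powr_add)
  also have "(\<delta>^2 - \<delta>) + pexp \<delta> = 1" by (simp add: pexp_def)
  finally show "\<tau> powr (\<delta>^2 - \<delta>) * \<tau> powr pexp \<delta> = \<tau>" using assms by (simp add: powr_one)
  have "\<tau> powr (\<delta>^2 - \<delta>) * \<tau> powr \<delta> = \<tau> powr ((\<delta>^2 - \<delta>) + \<delta>)" by (rule powr_add[symmetric])
  also have "(\<delta>^2 - \<delta>) + \<delta> = \<delta>^2" by simp
  finally show "\<tau> powr (\<delta>^2 - \<delta>) * \<tau> powr \<delta> = \<tau> powr (\<delta>^2)" .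
  have "\<tau> powr \<delta> / \<tau> powr pexp \<delta> = \<tau> powr (\<delta> - pexp \<delta>)" by (simp add: powr_diff)
  also have "\<delta> - pexp \<delta> = \<delta>^2 - 1" by (simp add: pexp_def)
  finally show "\<tau> powr \<delta> / \<tau> powr pexp \<delta> = \<tau> powr (\<delta>^2 - 1)" .
qed

lemma basic:
  assumes "1 < \<delta>" "\<delta> < Phi" "0 < \<tau>" "\<tau> < tau_m \<delta>"
  shows "\<tau> < 1" "0 < FF \<delta> \<tau>" "aaf \<tau> \<delta> < 1" "0 < aaf \<tau> \<delta>"
proof -
  note tm = tau_m_props[OF assms(1,2)]
  show t1: "\<tau> < 1" using tm assms by simp
  have p: "0 < pexp \<delta>" using pexp_pos[OF assms(1,2)] .
  have pl: "pexp \<delta> < \<delta>" using pexp_lt assms(1) .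
  have "\<tau> powr (\<delta> - pexp \<delta>) < 1 powr (\<delta> - pexp \<delta>)"
    by (rule powr_less_mono2) (use pl assms t1 in auto)
  then have "\<tau> powr \<delta> / \<tau> powr pexp \<delta> < 1" by (simp add: powr_diff)
  then have "\<tau> powr \<delta> < \<tau> powr pexp \<delta>" using assms(3) by (simp add: divide_less_eq)
  then show "0 < FF \<delta> \<tau>" unfolding FF_def by simp
  have e: "0 < \<delta>^2 - 1" using assms(1) by (simp add: power2_eq_square) (metis less_1_mult)
  have "\<tau> powr (\<delta>^2 - 1) < tau_m \<delta> powr (\<delta>^2 - 1)"
    by (rule powr_less_mono2) (use e assms in auto)
  then have "\<tau> powr (\<delta>^2 - 1) < pexp \<delta> / \<delta>" using tm by simp
  then have "\<delta> * \<tau> powr (\<delta>^2 - 1) < pexp \<delta>" using assms(1) by (simp add: less_divide_eq mult.commute)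
  then show "aaf \<tau> \<delta> < 1" unfolding aaf_def pexp_def by simp
  have "0 < \<delta>^2 - \<delta>" using assms(1) by (simp add: power2_eq_square)
  moreover have "0 < \<delta> * \<tau> powr (\<delta>^2 - 1)" using assms by simp
  ultimately show "0 < aaf \<tau> \<delta>" unfolding aaf_def by simp
qed

lemma key_identity:
  fixes F C Q D k s N g :: real
  assumes "s^2 = 1" "Q^2 = F^2 - (1 - k^2) * C^2" "D = F + s * k * Q" "D \<noteq> 0"
    "N = F^2 + k^2 * C^2" "g = N / D"
  shows "(F - g)^2 + k^2 * C^2 = k^2 * g^2"
proof -
  have gD: "g * D = N" using assms by simp
  have dd: "D^2 - 2 * F * D = - (1 - k^2) * N"
  proof -
    have "D^2 - 2 * F * D = (D - F)^2 - F^2" by (simp add: power2_eq_square algebra_simps)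
    also have "(D - F)^2 = s^2 * k^2 * Q^2" using assms(3) by (simp add: power2_eq_square algebra_simps)
    finally show ?thesis using assms(1,2,5) by (simp add: algebra_simps)
  qed
  have "D^2 * ((F - g)^2 + k^2 * C^2 - k^2 * g^2) = D^2 * (N - 2 * F * g + (1 - k^2) * g^2)"
    using assms(5) by (simp add: power2_eq_square algebra_simps)
  also have "\<dots> = N * D^2 - 2 * F * (g * D) * D + (1 - k^2) * (g * D)^2"
    by (simp add: power2_eq_square algebra_simps)
  also have "\<dots> = N * (D^2 - 2 * F * D + (1 - k^2) * N)" unfolding gD by (simp add: power2_eq_square algebra_simps)
  also have "\<dots> = 0" using dd by (simp add: algebra_simps)
  finally show ?thesis using assms(4) by simp
qed

lemma sincos:
  assumes gd: "good b k K \<tau> \<delta>" and k: "0 < k"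
  shows "0 < Gmf b k K \<tau> \<delta>"
    "Gmf b k K \<tau> \<delta> * (1 + k * sin (Svf b k K \<tau> \<delta>)) = FF \<delta> \<tau>"
    "Gmf b k K \<tau> \<delta> * cos (Svf b k K \<tau> \<delta>) = Ccf k K \<tau> \<delta>"
proof -
  define F where "F = FF \<delta> \<tau>"
  define C where "C = Ccf k K \<tau> \<delta>"
  define g where "g = Gmf b k K \<tau> \<delta>"
  define s where "s = sgb b"
  have G: "1 < \<delta>" "\<delta> < Phi" "0 < \<tau>" "\<tau> < tau_m \<delta>" "Qaf k K \<tau> \<delta> > 0"
     "Dnf b k K \<tau> \<delta> > 0" "s * (F - g) > 0"
    using gd unfolding good_def F_def g_def s_def by auto
  have F0: "0 < F" using basic[OF G(1-4)] unfolding F_def by simp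
  have ss: "s^2 = 1" unfolding s_def sgb_def by simp
  have g0: "0 < g" unfolding g_def Gmf_def using G(6) F0 unfolding F_def
    by (intro divide_pos_pos add_pos_nonneg) auto
  then show "0 < Gmf b k K \<tau> \<delta>" by (simp add: g_def)
  have id: "(F - g)^2 + k^2 * C^2 = k^2 * g^2"
    by (rule key_identity[OF ss, where Q = "sqrt (Qaf k K \<tau> \<delta>)" and D = "Dnf b k K \<tau> \<delta>"])
       (use G(5,6) in \<open>auto simp: Qaf_def F_def C_def Dnf_def s_def g_def Gmf_def\<close>)
  define x where "x = C / g"
  have "k^2 * C^2 \<le> k^2 * g^2" using id by (smt (verit) zero_le_power2)
  then have "C^2 \<le> g^2" using k by simp
  then have "x^2 \<le> 1" unfolding x_def using g0 by (simp add: power_divide)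
  then have xa: "\<bar>x\<bar> \<le> 1" by (simp add: abs_square_le_1)
  have fg: "(F-g)^2 = k^2*(g^2 - C^2)" using id by (simp add: algebra_simps)
  have "((F - g) / (k * g))^2 = (F-g)^2 / (k^2 * g^2)" by (simp add: power_divide power_mult_distrib)
  also have "\<dots> = k^2*(g^2 - C^2) / (k^2*g^2)" using fg by simp
  also have "\<dots> = (g^2 - C^2)/g^2" using k by simp
  also have "\<dots> = 1 - x^2" unfolding x_def using g0 by (simp add: power_divide diff_divide_distrib)
  finally have "1 - x^2 = ((F - g) / (k * g))^2" by simp
  then have sq: "sqrt (1 - x^2) = \<bar>F - g\<bar> / (k * g)" using g0 k by (simp add: abs_mult)
  have sv: "Svf b k K \<tau> \<delta> = (if b then arccos x else 2 * pi - arccos x)"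
    unfolding Svf_def x_def C_def g_def by simp
  have cs: "cos (Svf b k K \<tau> \<delta>) = x" unfolding sv using xa by (simp add: cos_arccos_abs)
  have sn: "sin (Svf b k K \<tau> \<delta>) = (F - g) / (k * g)"
  proof (cases b)
    case True
    then have "F - g > 0" using G(7) by (simp add: s_def sgb_def)
    then show ?thesis unfolding sv using True xa sq by (simp add: sin_arccos_abs)
  next
    case False
    then have "F - g < 0" using G(7) by (simp add: s_def sgb_def)
    have s2: "sin (2*pi - y) = - sin y" for y by (simp add: sin_diff)
    have "sin (Svf b k K \<tau> \<delta>) = - sqrt (1 - x^2)" unfolding sv using False xa by (simp add: s2 sin_arccos_abs)
    then show ?thesis using sq k g0 \<open>F - g < 0\<close> by (simp add: field_simps)
  qed
  show "Gmf b k K \<tau> \<delta> * (1 + k * sin (Svf b k K \<tau> \<delta>)) = FF \<delta> \<tau>"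
    unfolding sn using g0 k by (simp add: g_def[symmetric] F_def[symmetric] field_simps)
  show "Gmf b k K \<tau> \<delta> * cos (Svf b k K \<tau> \<delta>) = Ccf k K \<tau> \<delta>"
    unfolding cs x_def using g0 by (simp add: g_def[symmetric] C_def[symmetric])
qed


lemma memH:
  assumes gd: "good b k K \<tau> \<delta>" and k: "0 < k" and K: "0 < K"
  shows "(\<tau>, \<delta>, Gmf b k K \<tau> \<delta>, Svf b k K \<tau> \<delta>) \<in> Hset k K"
proof -
  define g where "g = Gmf b k K \<tau> \<delta>"
  define s where "s = Svf b k K \<tau> \<delta>"
  define F where "F = FF \<delta> \<tau>"
  define a where "a = aaf \<tau> \<delta>"
  have G: "1 < \<delta>" "\<delta> < Phi" "0 < \<tau>" "\<tau> < tau_m \<delta>" using gd unfolding good_def by auto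
  note bs = basic[OF G]
  have g0: "0 < g" and gs: "g * (1 + k * sin s) = F" and gc: "g * cos s = Ccf k K \<tau> \<delta>"
    using sincos[OF gd k] unfolding g_def s_def F_def by auto
  have pp: "\<tau> powr pexp \<delta> > 0" using G by simp
  have A: "\<delta>^2 * \<tau> powr (\<delta>^2 - 1) + g * (\<delta>^2 - \<delta>) * \<tau> powr (- pexp \<delta>) * (1 + k * sin s) = a"
  proof -
    have "g * (\<delta>^2 - \<delta>) * \<tau> powr (- pexp \<delta>) * (1 + k * sin s)
       = (\<delta>^2 - \<delta>) * (g * (1 + k * sin s)) * \<tau> powr (- pexp \<delta>)" by (simp only: mult_ac)
    also have "\<dots> = (\<delta>^2 - \<delta>) * (F / \<tau> powr pexp \<delta>)"
      unfolding gs by (simp add: powr_minus divide_inverse)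
    also have "F / \<tau> powr pexp \<delta> = 1 - \<tau> powr \<delta> / \<tau> powr pexp \<delta>"
      using pp unfolding F_def FF_def by (simp add: diff_divide_distrib)
    also have "\<tau> powr \<delta> / \<tau> powr pexp \<delta> = \<tau> powr (\<delta>^2 - 1)" using exps(3)[OF G(3)] .
    finally show ?thesis unfolding a_def aaf_def by (simp add: algebra_simps)
  qed
  have det: "a * 1 - (g * k * \<tau> powr (\<delta>^2 - \<delta>) * cos s) * (- 1 / (K * \<tau>)) = 1"
  proof -
    have "(g * k * \<tau> powr (\<delta>^2 - \<delta>) * cos s) * (- 1 / (K * \<tau>))
        = - (k * \<tau> powr (\<delta>^2 - \<delta>) * (g * cos s)) / (K * \<tau>)" by (simp add: algebra_simps)
    also have "\<dots> = - ((1 - a) * (\<tau> powr (\<delta>^2 - \<delta>) * \<tau> powr pexp \<delta>)) / \<tau>"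
      unfolding gc Ccf_def a_def using k K G by (simp add: field_simps)
    also have "\<dots> = - (1 - a)" unfolding exps(1)[OF G(3)] using G by simp
    finally show ?thesis by simp
  qed
  define \<theta> where "\<theta> = arccos ((a + 1) / 2)"
  have ab: "-1 < (a + 1) / 2" "(a + 1) / 2 < 1" using bs unfolding a_def by auto
  have th: "0 < \<theta>" "\<theta> < pi" using arccos_lt_bounded[OF ab] unfolding \<theta>_def by auto
  have tr: "a + 1 = 2 * cos \<theta>" unfolding \<theta>_def using ab by simp
  have eig: "eigenvalues_C (DG k K \<delta> g \<tau> s) = {cis \<theta>, cis (-\<theta>)}"
    unfolding DG_def
    by (rule eig2) (use G K det tr A in \<open>simp_all\<close>)
  have gf: "gfun k \<delta> g \<tau> s = 0"
  proof -
    have "gfun k \<delta> g \<tau> s = \<tau> powr (\<delta>^2) + \<tau> powr (\<delta>^2 - \<delta>) * (g * (1 + k * sin s)) - \<tau>"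
      unfolding gfun_def by (simp add: algebra_simps)
    also have "\<dots> = \<tau> powr (\<delta>^2) + (\<tau> powr (\<delta>^2 - \<delta>) * \<tau> powr pexp \<delta> - \<tau> powr (\<delta>^2 - \<delta>) * \<tau> powr \<delta>) - \<tau>"
      unfolding gs F_def FF_def by (simp add: algebra_simps)
    also have "\<dots> = 0" unfolding exps[OF G(3)] by simp
    finally show ?thesis .
  qed
  show ?thesis
    unfolding Hset_def g_def[symmetric] s_def[symmetric]
    using G bs g0 gf eig th by auto
qed



lemma lim_pexp: "(d \<longlongrightarrow> \<delta>0) F \<Longrightarrow> ((\<lambda>x. pexp (d x)) \<longlongrightarrow> pexp \<delta>0) F"
  unfolding pexp_def by (intro tendsto_intros)

lemma lim_FF:
  assumes "(t \<longlongrightarrow> \<tau>0) F" "(d \<longlongrightarrow> \<delta>0) F" "\<tau>0 \<noteq> 0"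
  shows "((\<lambda>x. FF (d x) (t x)) \<longlongrightarrow> FF \<delta>0 \<tau>0) F"
  unfolding FF_def by (intro tendsto_diff tendsto_powr lim_pexp assms)

lemma lim_aa:
  assumes "(t \<longlongrightarrow> \<tau>0) F" "(d \<longlongrightarrow> \<delta>0) F" "\<tau>0 \<noteq> 0"
  shows "((\<lambda>x. aaf (t x) (d x)) \<longlongrightarrow> aaf \<tau>0 \<delta>0) F"
  unfolding aaf_def by (intro tendsto_intros tendsto_powr assms)

lemma lim_Cc:
  assumes "(t \<longlongrightarrow> \<tau>0) F" "(d \<longlongrightarrow> \<delta>0) F" "\<tau>0 \<noteq> 0" "k \<noteq> 0"
  shows "((\<lambda>x. Ccf k K (t x) (d x)) \<longlongrightarrow> Ccf k K \<tau>0 \<delta>0) F"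
  unfolding Ccf_def by (intro tendsto_divide tendsto_mult tendsto_const tendsto_diff tendsto_powr lim_aa lim_pexp assms)

lemma lim_Qa:
  assumes "(t \<longlongrightarrow> \<tau>0) F" "(d \<longlongrightarrow> \<delta>0) F" "\<tau>0 \<noteq> 0" "k \<noteq> 0"
  shows "((\<lambda>x. Qaf k K (t x) (d x)) \<longlongrightarrow> Qaf k K \<tau>0 \<delta>0) F"
  unfolding Qaf_def by (intro tendsto_intros lim_Cc lim_FF assms)

lemma lim_Dn:
  assumes "(t \<longlongrightarrow> \<tau>0) F" "(d \<longlongrightarrow> \<delta>0) F" "\<tau>0 \<noteq> 0" "k \<noteq> 0"
  shows "((\<lambda>x. Dnf b k K (t x) (d x)) \<longlongrightarrow> Dnf b k K \<tau>0 \<delta>0) F"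
  unfolding Dnf_def by (intro tendsto_intros lim_Qa lim_FF assms)

lemma lim_Gm:
  assumes "(t \<longlongrightarrow> \<tau>0) F" "(d \<longlongrightarrow> \<delta>0) F" "\<tau>0 \<noteq> 0" "k \<noteq> 0" "Dnf b k K \<tau>0 \<delta>0 \<noteq> 0"
  shows "((\<lambda>x. Gmf b k K (t x) (d x)) \<longlongrightarrow> Gmf b k K \<tau>0 \<delta>0) F"
  unfolding Gmf_def by (intro tendsto_intros lim_Dn lim_Cc lim_FF assms)

lemma lim_Sv:
  assumes "(t \<longlongrightarrow> \<tau>0) F" "(d \<longlongrightarrow> \<delta>0) F" "\<tau>0 \<noteq> 0" "k \<noteq> 0" "Dnf b k K \<tau>0 \<delta>0 \<noteq> 0"
    "Gmf b k K \<tau>0 \<delta>0 \<noteq> 0" "\<bar>Ccf k K \<tau>0 \<delta>0 / Gmf b k K \<tau>0 \<delta>0\<bar> < 1"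
  shows "((\<lambda>x. Svf b k K (t x) (d x)) \<longlongrightarrow> Svf b k K \<tau>0 \<delta>0) F"
proof -
  have q: "((\<lambda>x. Ccf k K (t x) (d x) / Gmf b k K (t x) (d x)) \<longlongrightarrow> Ccf k K \<tau>0 \<delta>0 / Gmf b k K \<tau>0 \<delta>0) F"
    by (intro tendsto_divide lim_Gm lim_Cc assms)
  have ic: "isCont arccos (Ccf k K \<tau>0 \<delta>0 / Gmf b k K \<tau>0 \<delta>0)"
  proof (rule isCont_arccos)
    from assms(7) show "-1 < Ccf k K \<tau>0 \<delta>0 / Gmf b k K \<tau>0 \<delta>0" "Ccf k K \<tau>0 \<delta>0 / Gmf b k K \<tau>0 \<delta>0 < 1"
      unfolding abs_less_iff by linarith+
  qed
  have a: "((\<lambda>x. arccos (Ccf k K (t x) (d x) / Gmf b k K (t x) (d x))) \<longlongrightarrow> arccos (Ccf k K \<tau>0 \<delta>0 / Gmf b k K \<tau>0 \<delta>0)) F"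
    by (rule isCont_tendsto_compose[OF ic q])
  show ?thesis
  proof (cases b)
    case True then show ?thesis unfolding Svf_def using a by simp
  next
    case False then show ?thesis unfolding Svf_def using a by (simp add: tendsto_diff[OF tendsto_const])
  qed
qed

lemma lim_taum:
  assumes "(d \<longlongrightarrow> \<delta>0) F" "1 < \<delta>0" "\<delta>0 < Phi"
  shows "((\<lambda>x. tau_m (d x)) \<longlongrightarrow> tau_m \<delta>0) F"
proof -
  have p: "0 < pexp \<delta>0" by (rule pexp_pos[OF assms(2,3)])
  have e: "\<delta>0^2 - 1 \<noteq> 0" using assms(2) by (simp add: power2_eq_square) (metis less_1_mult less_irrefl)
  show ?thesis unfolding tau_m_def
    by (intro tendsto_powr tendsto_divide lim_pexp tendsto_diff tendsto_power tendsto_const assms(1))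
       (use p assms(2) e in auto)
qed

lemma Cinf_uminus: "Cinf_on U f \<Longrightarrow> Cinf_on U (\<lambda>z. - f z)"
  using Cinf_mult[OF Cinf_const, of U f "-1"] by simp

lemma Cinf_pow2: "Cinf_on U f \<Longrightarrow> Cinf_on U (\<lambda>z. (f z)^2)"
  using Cinf_mult[of U f f] by (simp add: power2_eq_square)

definition Uset :: "bool \<Rightarrow> real \<Rightarrow> real \<Rightarrow> (real \<times> real) set" where
  "Uset b k K = {z. good b k K (fst z) (snd z)}"

lemma open_Uset:
  assumes kz: "k \<noteq> 0"
  shows "open (Uset b k K)"
proof (subst open_subopen, intro ballI)
  fix z assume "z \<in> Uset b k K"
  then have gz: "good b k K (fst z) (snd z)" by (simp add: Uset_def)
  then have G: "1 < snd z" "snd z < Phi" "0 < fst z" "fst z < tau_m (snd z)" "Qaf k K (fst z) (snd z) > 0"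
     "Dnf b k K (fst z) (snd z) > 0" "sgb b * (FF (snd z) (fst z) - Gmf b k K (fst z) (snd z)) > 0"
    unfolding good_def by auto
  have t: "(fst \<longlongrightarrow> fst z) (nhds z)" and d: "(snd \<longlongrightarrow> snd z) (nhds z)"
    by (intro tendsto_fst tendsto_snd filterlim_ident)+
  have nz: "fst z \<noteq> 0" using G by simp
  have "eventually (\<lambda>y. 1 < snd y) (nhds z)" by (rule order_tendstoD(1)[OF d G(1)])
  moreover have "eventually (\<lambda>y. snd y < Phi) (nhds z)" by (rule order_tendstoD(2)[OF d G(2)])
  moreover have "eventually (\<lambda>y. 0 < fst y) (nhds z)" by (rule order_tendstoD(1)[OF t G(3)])
  moreover have "eventually (\<lambda>y. 0 < tau_m (snd y) - fst y) (nhds z)"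
    by (rule order_tendstoD(1)[OF tendsto_diff[OF lim_taum[OF d G(1,2)] t]]) (use G in simp)
  moreover have "eventually (\<lambda>y. 0 < Qaf k K (fst y) (snd y)) (nhds z)"
    by (rule order_tendstoD(1)[OF lim_Qa[OF t d nz kz]]) (use G in simp)
  moreover have "eventually (\<lambda>y. 0 < Dnf b k K (fst y) (snd y)) (nhds z)"
    by (rule order_tendstoD(1)[OF lim_Dn[OF t d nz kz]]) (use G in simp)
  moreover have "eventually (\<lambda>y. 0 < sgb b * (FF (snd y) (fst y) - Gmf b k K (fst y) (snd y))) (nhds z)"
    by (rule order_tendstoD(1)[OF tendsto_mult[OF tendsto_const tendsto_diff[OF lim_FF[OF t d nz] lim_Gm[OF t d nz kz]]]])
       (use G in simp_all)
  ultimately have "eventually (\<lambda>y. y \<in> Uset b k K) (nhds z)"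
    by eventually_elim (auto simp: Uset_def good_def)
  then show "\<exists>T. open T \<and> z \<in> T \<and> T \<subseteq> Uset b k K"
    unfolding eventually_nhds by blast
qed

lemma Cinf_Gm:
  assumes k: "0 < k"
  shows "Cinf_on (Uset b k K) (\<lambda>z. Gmf b k K (fst z) (snd z))"
proof -
  let ?U = "Uset b k K"
  have o: "open ?U" by (rule open_Uset) (use k in simp)
  have G: "1 < snd z" "0 < fst z" "Qaf k K (fst z) (snd z) > 0" "Dnf b k K (fst z) (snd z) > 0"
    if "z \<in> ?U" for z using that unfolding Uset_def good_def by auto
  have cp: "Cinf_on ?U (\<lambda>z. pexp (snd z))"
    unfolding pexp_def by (intro Cinf_add Cinf_diff Cinf_uminus Cinf_pow2 Cinf_snd Cinf_const Cinf_mult)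
  have cpw: "Cinf_on ?U (\<lambda>z. fst z powr e (snd z))" if "Cinf_on ?U (\<lambda>z. e (snd z))" for e
    by (rule Cinf_powr[OF o Cinf_fst that]) (use G in auto)
  have cF: "Cinf_on ?U (\<lambda>z. FF (snd z) (fst z))"
    unfolding FF_def by (intro Cinf_diff cpw cp Cinf_snd)
  have ca: "Cinf_on ?U (\<lambda>z. aaf (fst z) (snd z))"
  proof -
    have "Cinf_on ?U (\<lambda>z. fst z powr ((snd z)^2 - 1))"
      by (rule cpw[of "\<lambda>d. d^2 - 1"]) (intro Cinf_diff Cinf_pow2 Cinf_snd Cinf_const)
    then show ?thesis unfolding aaf_def by (intro Cinf_add Cinf_diff Cinf_pow2 Cinf_snd Cinf_mult)
  qed
  have cC: "Cinf_on ?U (\<lambda>z. Ccf k K (fst z) (snd z))"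
    unfolding Ccf_def by (intro Cinf_divide Cinf_mult Cinf_const Cinf_diff ca cpw cp) (use k in auto)
  have cQ: "Cinf_on ?U (\<lambda>z. Qaf k K (fst z) (snd z))"
    unfolding Qaf_def by (intro Cinf_diff Cinf_pow2 Cinf_mult Cinf_const cF cC)
  have cD: "Cinf_on ?U (\<lambda>z. Dnf b k K (fst z) (snd z))"
    unfolding Dnf_def by (intro Cinf_add Cinf_mult Cinf_const cF Cinf_sqrt[OF o cQ]) (use G in auto)
  show ?thesis
    unfolding Gmf_def by (intro Cinf_divide Cinf_add Cinf_pow2 Cinf_mult Cinf_const cF cC cD)
       (use G in force)
qed

lemma surf:
  fixes G :: "real \<times> real \<Rightarrow> real"
  assumes o: "open U" and c: "Cinf_on U G"
  shows "smooth_surface ((\<lambda>z. (fst z, snd z, G z)) ` U)"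
proof -
  define \<phi> where "\<phi> = (\<lambda>z. (fst z, snd z, G z))"
  define \<psi> where "\<psi> = (\<lambda>w::real\<times>real\<times>real. (fst w, fst (snd w)))"
  obtain gx gy where D: "Der U G gx gy" using Cinf_D[OF c] by blast
  have sp: "smooth_param U \<phi>"
    unfolding smooth_param_def
  proof (intro conjI ballI)
    show "open U" by fact
    show "Cinf_on U (\<lambda>z. fst (\<phi> z))" unfolding \<phi>_def by (simp add: Cinf_fst)
    show "Cinf_on U (\<lambda>z. fst (snd (\<phi> z)))" unfolding \<phi>_def by (simp add: Cinf_snd)
    show "Cinf_on U (\<lambda>z. snd (snd (\<phi> z)))" unfolding \<phi>_def using c by simp
    fix z assume z: "z \<in> U"
    have g: "(G has_derivative (\<lambda>h. fst h * gx z + snd h * gy z)) (at z)"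
      using D z unfolding Der_def by blast
    have "(\<phi> has_derivative (\<lambda>h. (fst h, snd h, fst h * gx z + snd h * gy z))) (at z)"
      unfolding \<phi>_def
      by (intro has_derivative_Pair g has_derivative_fst[OF has_derivative_ident]
          has_derivative_snd[OF has_derivative_ident])
    moreover have "inj (\<lambda>h::real\<times>real. (fst h, snd h, fst h * gx z + snd h * gy z))"
      by (auto simp: inj_def prod_eq_iff)
    ultimately show "\<exists>D. (\<phi> has_derivative D) (at z) \<and> inj D" by blast
  qed
  have cg: "continuous_on U G" by (rule Cinf_contD[OF c])
  have hom: "homeomorphism U (UNIV \<inter> \<phi> ` U) \<phi> \<psi>"
    unfolding homeomorphism_def
  proof (intro conjI ballI)
    show "continuous_on U \<phi>" unfolding \<phi>_def by (intro continuous_intros cg)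
    show "continuous_on (UNIV \<inter> \<phi> ` U) \<psi>" unfolding \<psi>_def by (intro continuous_intros)
    show "\<phi> ` U = UNIV \<inter> \<phi> ` U" by simp
    show "\<psi> ` (UNIV \<inter> \<phi> ` U) = U" by (force simp: \<phi>_def \<psi>_def image_iff)
  qed (auto simp: \<phi>_def \<psi>_def)
  show ?thesis
    unfolding smooth_surface_def \<phi>_def[symmetric]
    using sp hom by blast
qed



lemma FF_pos:
  assumes "1 < \<delta>" "0 < \<tau>" "\<tau> < 1" shows "0 < FF \<delta> \<tau>"
proof -
  have pl: "pexp \<delta> < \<delta>" using pexp_lt assms(1) .
  have "\<tau> powr (\<delta> - pexp \<delta>) < 1 powr (\<delta> - pexp \<delta>)"
    by (rule powr_less_mono2) (use pl assms in auto)
  then have "\<tau> powr \<delta> / \<tau> powr pexp \<delta> < 1" by (simp add: powr_diff)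
  then have "\<tau> powr \<delta> < \<tau> powr pexp \<delta>" using assms(2) by (simp add: divide_less_eq)
  then show ?thesis unfolding FF_def by simp
qed

theorem mainTheorem9:
  fixes k K \<tau>s \<delta>s \<gamma>s ss :: real
  assumes "k > 0" and "K > 0"
    and "1 < \<delta>s" and "\<delta>s < Phi"
    and "\<tau>s = tau_m \<delta>s"
    and "(\<gamma>s = M_F \<delta>s / (1 + k) \<and> ss = pi / 2) \<or>
         (0 < k \<and> k < 1 \<and> \<gamma>s = M_F \<delta>s / (1 - k) \<and> ss = 3 * pi / 2)"
  shows "(\<tau>s, \<delta>s, \<gamma>s, ss) islimpt Hset k K \<and>
    (\<exists>S. smooth_surface S \<and> S \<subseteq> proj3 ` Hset k K \<and> (\<tau>s, \<delta>s, \<gamma>s) \<in> closure S)"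
proof -
  note k = assms(1) and K = assms(2) and d1 = assms(3) and d2 = assms(4) and ts = assms(5)
  have kz: "k \<noteq> 0" using k by simp
  define b where "b = (\<gamma>s = M_F \<delta>s / (1 + k) \<and> ss = pi / 2)"
  define sg where "sg = sgb b"
  define Mf where "Mf = M_F \<delta>s"
  note tm = tau_m_props[OF d1 d2]
  have ts0: "0 < \<tau>s" and ts1: "\<tau>s < 1" using tm ts by auto
  have Mf0: "0 < Mf" unfolding Mf_def M_F_def ts[symmetric] by (rule FF_pos[OF d1 ts0 ts1])
  have FFs: "FF \<delta>s \<tau>s = Mf" unfolding Mf_def M_F_def ts ..
  have sgk: "0 < 1 + sg * k" and gs: "\<gamma>s = Mf / (1 + sg * k)"
    and ssv: "ss = (if b then pi / 2 else 3 * pi / 2)"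
    using assms(6) k unfolding b_def sg_def sgb_def Mf_def by (auto split: if_splits)
  have sg2: "sg * sg = 1" unfolding sg_def sgb_def by simp
  have aas: "aaf \<tau>s \<delta>s = 1"
  proof -
    have "\<delta>s * \<tau>s powr (\<delta>s^2 - 1) = pexp \<delta>s" using tm(3) d1 ts by simp
    then show ?thesis unfolding aaf_def pexp_def by simp
  qed
  have Ccs: "Ccf k K \<tau>s \<delta>s = 0" unfolding Ccf_def aas by simp
  have Qas: "Qaf k K \<tau>s \<delta>s = Mf^2" unfolding Qaf_def Ccs FFs by simp
  have Dns: "Dnf b k K \<tau>s \<delta>s = Mf * (1 + sg * k)"
    unfolding Dnf_def Qas FFs sg_def using Mf0 by (simp add: algebra_simps)
  have Dn0: "Dnf b k K \<tau>s \<delta>s > 0" unfolding Dns using Mf0 sgk by simp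
  have Gms: "Gmf b k K \<tau>s \<delta>s = \<gamma>s"
    unfolding Gmf_def Dns FFs Ccs gs using Mf0 sgk by (simp add: power2_eq_square)
  have gs0: "0 < \<gamma>s" unfolding gs using Mf0 sgk by simp
  have pos3: "sg * (Mf - \<gamma>s) > 0"
  proof -
    have "sg * (Mf - \<gamma>s) = sg * (Mf * (1 + sg * k) - Mf) / (1 + sg * k)"
      unfolding gs using sgk by (simp add: field_simps)
    also have "\<dots> = Mf * k / (1 + sg * k)" using sg2 by (simp add: algebra_simps)
    finally show ?thesis using Mf0 k sgk by simp
  qed
  have Svs: "Svf b k K \<tau>s \<delta>s = ss" unfolding Svf_def Ccs ssv by simp
  let ?F = "at_left \<tau>s"
  have t: "((\<lambda>x. x) \<longlongrightarrow> \<tau>s) ?F" by (rule tendsto_ident_at)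
  have d: "((\<lambda>x. \<delta>s) \<longlongrightarrow> \<delta>s) ?F" by (rule tendsto_const)
  have tnz: "\<tau>s \<noteq> 0" using ts0 by simp
  have "((\<lambda>x. Gmf b k K x \<delta>s) \<longlongrightarrow> Gmf b k K \<tau>s \<delta>s) ?F"
    by (rule lim_Gm[OF t d tnz kz]) (use Dn0 in simp)
  then have LG: "((\<lambda>x. Gmf b k K x \<delta>s) \<longlongrightarrow> \<gamma>s) ?F" using Gms by simp
  have "((\<lambda>x. Svf b k K x \<delta>s) \<longlongrightarrow> Svf b k K \<tau>s \<delta>s) ?F"
    by (rule lim_Sv[OF t d tnz kz]) (use Dn0 Gms gs0 Ccs in simp_all)
  then have LS: "((\<lambda>x. Svf b k K x \<delta>s) \<longlongrightarrow> ss) ?F" using Svs by simp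
  have ev: "eventually (\<lambda>x. good b k K x \<delta>s \<and> x < \<tau>s) ?F"
  proof -
    have "eventually (\<lambda>x. x \<in> {0<..<\<tau>s}) ?F" by (rule eventually_at_left_real[OF ts0])
    moreover have "eventually (\<lambda>x. 0 < Qaf k K x \<delta>s) ?F"
      by (rule order_tendstoD(1)[OF lim_Qa[OF t d tnz kz]]) (use Qas Mf0 in simp)
    moreover have "eventually (\<lambda>x. 0 < Dnf b k K x \<delta>s) ?F"
      by (rule order_tendstoD(1)[OF lim_Dn[OF t d tnz kz]]) (use Dn0 in simp)
    moreover have "eventually (\<lambda>x. 0 < sgb b * (FF \<delta>s x - Gmf b k K x \<delta>s)) ?F"
      by (rule order_tendstoD(1)[OF tendsto_mult[OF tendsto_const tendsto_diff[OF lim_FF[OF t d tnz] LG]]])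
         (use pos3 FFs in \<open>simp add: sg_def\<close>)
    ultimately show ?thesis
      by eventually_elim (use d1 d2 ts in \<open>auto simp: good_def\<close>)
  qed
  have nb: "?F \<noteq> bot" by simp
  have P4: "((\<lambda>x. (x, \<delta>s, Gmf b k K x \<delta>s, Svf b k K x \<delta>s)) \<longlongrightarrow> (\<tau>s, \<delta>s, \<gamma>s, ss)) ?F"
    by (intro tendsto_Pair t d LG LS)
  have lp: "(\<tau>s, \<delta>s, \<gamma>s, ss) islimpt Hset k K"
    unfolding islimpt_approachable
  proof (intro allI impI)
    fix e :: real assume e: "0 < e"
    have "eventually (\<lambda>x. dist (x, \<delta>s, Gmf b k K x \<delta>s, Svf b k K x \<delta>s) (\<tau>s, \<delta>s, \<gamma>s, ss) < e) ?F"
      using P4 e unfolding tendsto_iff by blast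
    with ev have "eventually (\<lambda>x. (good b k K x \<delta>s \<and> x < \<tau>s) \<and>
        dist (x, \<delta>s, Gmf b k K x \<delta>s, Svf b k K x \<delta>s) (\<tau>s, \<delta>s, \<gamma>s, ss) < e) ?F"
      by (rule eventually_conj)
    then obtain x where x: "good b k K x \<delta>s" "x < \<tau>s"
      "dist (x, \<delta>s, Gmf b k K x \<delta>s, Svf b k K x \<delta>s) (\<tau>s, \<delta>s, \<gamma>s, ss) < e"
      using eventually_happens'[OF nb] by blast
    show "\<exists>x'\<in>Hset k K. x' \<noteq> (\<tau>s, \<delta>s, \<gamma>s, ss) \<and> dist x' (\<tau>s, \<delta>s, \<gamma>s, ss) < e"
      using memH[OF x(1) k K] x(2,3) by (intro bexI[of _ "(x, \<delta>s, Gmf b k K x \<delta>s, Svf b k K x \<delta>s)"]) auto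
  qed
  define S where "S = (\<lambda>z. (fst z, snd z, Gmf b k K (fst z) (snd z))) ` Uset b k K"
  have sS: "smooth_surface S"
    unfolding S_def by (rule surf[OF open_Uset[OF kz] Cinf_Gm[OF k]])
  have sub: "S \<subseteq> proj3 ` Hset k K"
  proof
    fix w assume "w \<in> S"
    then obtain z where z: "z \<in> Uset b k K" and w: "w = (fst z, snd z, Gmf b k K (fst z) (snd z))"
      unfolding S_def by blast
    have "good b k K (fst z) (snd z)" using z by (simp add: Uset_def)
    from memH[OF this k K] have "(fst z, snd z, Gmf b k K (fst z) (snd z), Svf b k K (fst z) (snd z)) \<in> Hset k K" .
    moreover have "w = proj3 (fst z, snd z, Gmf b k K (fst z) (snd z), Svf b k K (fst z) (snd z))"
      unfolding w proj3_def by simp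
    ultimately show "w \<in> proj3 ` Hset k K" by blast
  qed
  have P3: "((\<lambda>x. (x, \<delta>s, Gmf b k K x \<delta>s)) \<longlongrightarrow> (\<tau>s, \<delta>s, \<gamma>s)) ?F"
    by (intro tendsto_Pair t d LG)
  have cl: "(\<tau>s, \<delta>s, \<gamma>s) \<in> closure S"
    unfolding closure_approachable
  proof (intro allI impI)
    fix e :: real assume e: "0 < e"
    have "eventually (\<lambda>x. dist (x, \<delta>s, Gmf b k K x \<delta>s) (\<tau>s, \<delta>s, \<gamma>s) < e) ?F"
      using P3 e unfolding tendsto_iff by blast
    with ev have "eventually (\<lambda>x. (good b k K x \<delta>s \<and> x < \<tau>s) \<and>
        dist (x, \<delta>s, Gmf b k K x \<delta>s) (\<tau>s, \<delta>s, \<gamma>s) < e) ?F"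
      by (rule eventually_conj)
    then obtain x where x: "good b k K x \<delta>s"
      "dist (x, \<delta>s, Gmf b k K x \<delta>s) (\<tau>s, \<delta>s, \<gamma>s) < e"
      using eventually_happens'[OF nb] by blast
    have "(x, \<delta>s) \<in> Uset b k K" using x(1) by (simp add: Uset_def)
    then have "(x, \<delta>s, Gmf b k K x \<delta>s) \<in> S" unfolding S_def by force
    then show "\<exists>y\<in>S. dist y (\<tau>s, \<delta>s, \<gamma>s) < e" using x(2) by blast
  qed
  show ?thesis using lp sS sub cl by blast
qed


end
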